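(* Let $k\in\mathbb{N}$ be even and let $n,m$ be odd integers. Then $$2K_{k,1}\left(\tfrac{n}{2},\tfrac{m}{2}\right)=K_{k,2}(n,m)=H_{2k}(n,m)\qquad\text{and}\qquad K_{k,1}(n,m)=H_k(n,m).$$
   Context: For even $k\in\mathbb{N}$ put $k^*=4k$ if $\gcd(k,6)=2$ and $k^*=36k$ if $6\mid k$. For $a\in\{1,2\}$ and $n,m\in\frac12\mathbb{Z}$, $K_{k,a}(n,m)=\sum_{0\le h<ak,\ \gcd(h,ak)=1} e^{\frac{2\pi i}{ak}(-nh+mh')}$, where for each $h$, $h'$ is an integer with $hh'\equiv-1\pmod{k^*}$. For $K\in\mathbb{N}$ and integers $n,m$, the Kloosterman sum is $H_K(n,m)=\sum_{0\le h<K,\ \gcd(h,K)=1} e^{-\frac{2\pi i}{K}(nh-mw)}$, where for each $h$, $w$ is an integer with $hw\equiv-1\pmod K$. *)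

theory Defs
  imports Complex_Main "HOL-Number_Theory.Number_Theory"
begin

definition kstar :: "nat \<Rightarrow> int" where
  "kstar k = (if gcd k 6 = 2 then 4 * int k else 36 * int k)"

definition negInv :: "int \<Rightarrow> int \<Rightarrow> int" where
  "negInv M h = (SOME h'. [h * h' = -1] (mod M))"

text \<open>K_{k,a}(n,m) for n, m in (1/2)Z (represented as reals).\<close>
definition Kka :: "nat \<Rightarrow> nat \<Rightarrow> real \<Rightarrow> real \<Rightarrow> complex" where
  "Kka k a n m =
     (\<Sum>h\<in>{h. h < a * k \<and> coprime h (a * k)}.
        exp (2 * pi * \<i> / of_nat (a * k) *
             complex_of_real (- n * real h + m * real_of_int (negInv (kstar k) (int h)))))"

definition HK :: "nat \<Rightarrow> int \<Rightarrow> int \<Rightarrow> complex" where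
  "HK K n m =
     (\<Sum>h\<in>{h. h < K \<and> coprime h K}.
        exp (- (2 * pi * \<i> / of_nat K) *
             of_int (n * int h - m * negInv (int K) (int h))))"

end

theory Submission
  imports Defs
begin

definition ee :: "nat \<Rightarrow> int \<Rightarrow> complex" where
  "ee N x = exp (2 * pi * \<i> * of_int x / of_nat N)"

lemma ee_cong:
  assumes "[x = y] (mod int N)"
  shows "ee N x = ee N y"
proof (cases "N = 0")
  case True
  then show ?thesis using assms by (simp add: cong_def)
next
  case False
  from assms obtain t where t: "y = x + int N * t" by (auto simp: cong_iff_lin)
  have "ee N y = exp (2 * pi * \<i> * of_int x / of_nat N + \<i> * complex_of_real (2 * pi * of_int t))"
    unfolding ee_def t using False
    by (intro arg_cong[where f=exp]) (simp add: field_simps)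
  also have "\<dots> = ee N x * cis (2 * pi * of_int t)"
    by (simp add: ee_def exp_add cis_conv_exp)
  also have "cis (2 * pi * of_int t) = 1" by simp
  finally show ?thesis by simp
qed

lemma negInv_prop:
  assumes "coprime h M"
  shows "[h * negInv M h = -1] (mod M)"
proof -
  obtain x where "[h * x = 1] (mod M)" using cong_solve_coprime_int[OF assms] by blast
  then have "[h * (-x) = -1] (mod M)" using cong_minus_minus_iff by fastforce
  then show ?thesis unfolding negInv_def by (rule someI)
qed

lemma Kka_int:
  "Kka k a (of_int n) (of_int m) =
   (\<Sum>h\<in>{h. h < a * k \<and> coprime h (a * k)}. ee (a * k) (- n * int h + m * negInv (kstar k) (int h)))"
  unfolding Kka_def ee_def
  by (intro sum.cong refl arg_cong[where f=exp]) (simp add: field_simps)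

lemma Kka_half:
  "Kka k 1 (of_int n / 2) (of_int m / 2) =
   (\<Sum>h\<in>{h. h < k \<and> coprime h k}. ee (2 * k) (- n * int h + m * negInv (kstar k) (int h)))"
  unfolding Kka_def ee_def
  by (intro sum.cong refl arg_cong[where f=exp]) (auto simp add: field_simps)

lemma HK_ee:
  "HK K n m = (\<Sum>h\<in>{h. h < K \<and> coprime h K}. ee K (m * negInv (int K) (int h) - n * int h))"
  unfolding HK_def ee_def
  by (intro sum.cong refl arg_cong[where f=exp]) (simp add: field_simps)

lemma negInv_cong:
  assumes "coprime h M" "N dvd M" "coprime h N"
  shows "[negInv M h = negInv N h] (mod N)"
proof -
  have "[h * negInv M h = -1] (mod N)" using negInv_prop[OF assms(1)] assms(2) cong_dvd_modulus by blast
  moreover have "[h * negInv N h = -1] (mod N)" using negInv_prop[OF assms(3)] .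
  ultimately have "[h * negInv M h = h * negInv N h] (mod N)" by (meson cong_sym cong_trans)
  then show ?thesis using assms(3) cong_mult_lcancel by blast
qed

lemma g6: assumes "even (k::nat)" "\<not> 3 dvd k" shows "gcd k 6 = 2"
proof -
  have "gcd k 6 = gcd 6 (k mod 6)" by (metis gcd_red_nat)
  moreover have "k mod 6 = 2 \<or> k mod 6 = 4" using assms by presburger
  ultimately show ?thesis by (auto simp: gcd_non_0_nat)
qed

lemma c36: assumes "coprime (h::int) (int k)" "3 dvd k" "even k" shows "coprime h 36"
proof -
  have "6 dvd k" using assms(2,3) by presburger
  then obtain j where "k = 6 * j" by (elim dvdE)
  then have "coprime h 6" using assms(1) by simp
  then have "coprime h (6^2)" by (simp only: coprime_power_right_iff) simp
  moreover have "(6::int)^2 = 36" by simp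
  ultimately show ?thesis by metis
qed

lemma c4: assumes "coprime (h::int) (int k)" "even k" shows "coprime h 4"
proof -
  obtain j where "k = 2 * j" using assms by blast
  then have "coprime h 2" using assms(1) by simp
  then have "coprime h (2^2)" by (simp only: coprime_power_right_iff) simp
  moreover have "(2::int)^2 = 4" by simp
  ultimately show ?thesis by metis
qed

lemma c4n: assumes "coprime (h::nat) k" "even k" shows "coprime h 2"
proof -
  obtain j where "k = 2 * j" using assms by blast
  then show "coprime h 2" using assms(1) by simp
qed

lemma coprime_kstar:
  assumes "even k" "coprime h (int k)"
  shows "coprime h (kstar k)"
proof (cases "gcd k 6 = 2")
  case True
  then show ?thesis using c4[OF assms(2,1)] assms by (simp add: kstar_def)
next
  case False
  then have "3 dvd k" using g6 assms(1) by blast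
  then show ?thesis using c36[OF assms(2) _ assms(1)] assms False by (simp add: kstar_def)
qed

lemma cop2: "even (k::nat) \<Longrightarrow> coprime h (2 * k) \<longleftrightarrow> coprime h k"
  using c4n by auto

lemma shift:
  fixes j K M h1 h2 n m :: int
  assumes "even K" "odd j" "2 * K dvd M" "[j*h1 = -1] (mod M)" "[(j+K)*h2 = -1] (mod M)"
    "coprime (j+K) (2*K)" "odd n" "odd m"
  shows "[-n*(j+K) + m*h2 = -n*j + m*h1] (mod 2*K)"
proof -
  have a: "[j*h1 = -1] (mod 2*K)" using assms(3,4) cong_dvd_modulus by blast
  have b: "[(j+K)*h2 = -1] (mod 2*K)" using assms(3,5) cong_dvd_modulus by blast
  have "[j*h1 = -1] (mod 2)" using a cong_dvd_modulus by (metis dvd_triv_left)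
  then have "2 dvd j*h1 + 1" by (simp add: cong_iff_dvd_diff)
  then have "odd h1" by auto
  then obtain t where t: "j + h1 + K = 2 * t" using assms(1,2)
    by (metis evenE odd_add even_add)
  have "(j+K)*(h1+K) = j*h1 + (2*K)*t"
  proof -
    have "(j+K)*(h1+K) = j*h1 + K*(j+h1+K)" by (simp add: algebra_simps)
    then show ?thesis using t by simp
  qed
  then have "[(j+K)*(h1+K) = j*h1] (mod 2*K)" unfolding cong_iff_lin
    by (intro exI[of _ "-t"]) (simp add: algebra_simps)
  then have "[(j+K)*(h1+K) = -1] (mod 2*K)" using a cong_trans by blast
  then have "[(j+K)*h2 = (j+K)*(h1+K)] (mod 2*K)" using b by (meson cong_sym cong_trans)
  then have c: "[h2 = h1+K] (mod 2*K)" using assms(6) cong_mult_lcancel by blast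
  obtain s where s: "m - n = 2 * s"
  proof -
    have "even (m - n)" using assms(7,8) by simp
    then show ?thesis by (elim evenE) (rule that)
  qed
  have "[-n*(j+K) + m*h2 = -n*(j+K) + m*(h1+K)] (mod 2*K)"
    using c by (intro cong_add cong_refl cong_scalar_left)
  moreover have "-n*(j+K) + m*(h1+K) = (-n*j + m*h1) + (2*K)*s"
  proof -
    have "-n*(j+K) + m*(h1+K) = (-n*j + m*h1) + K*(m-n)" by (simp add: algebra_simps)
    then show ?thesis using s by simp
  qed
  ultimately show ?thesis
    by (metis (no_types, lifting) cong_iff_lin cong_sym cong_trans)
qed

lemma cop_add_self: "coprime (a + b) b \<longleftrightarrow> coprime a (b::'a::{euclidean_semiring_gcd})"
  unfolding coprime_iff_gcd_eq_1 by simp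

lemma part_HK:
  assumes "even k" "a = 1 \<or> a = 2"
  shows "Kka k a (of_int n) (of_int m) = HK (a * k) n m"
  unfolding Kka_int HK_ee
proof (intro sum.cong refl ee_cong)
  fix h assume "h \<in> {h. h < a * k \<and> coprime h (a * k)}"
  then have ch: "coprime h (a * k)" by simp
  then have "coprime h k" using assms(2) by auto
  then have ck: "coprime (int h) (kstar k)" using coprime_kstar assms(1) by simp
  have dv: "int (a * k) dvd kstar k" using assms(2) unfolding kstar_def by auto
  have "[negInv (kstar k) (int h) = negInv (int (a * k)) (int h)] (mod int (a * k))"
    using negInv_cong[OF ck dv] ch by simp
  then have "[- n * int h + m * negInv (kstar k) (int h) = - n * int h + m * negInv (int (a * k)) (int h)] (mod int (a * k))"
    by (intro cong_add cong_refl cong_scalar_left)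
  then show "[- n * int h + m * negInv (kstar k) (int h) = m * negInv (int (a * k)) (int h) - n * int h] (mod int (a * k))"
    by simp
qed

theorem theorem2p5:
  fixes k :: nat and n m :: int
  assumes "even k" and "odd n" and "odd m"
  shows "2 * Kka k 1 (of_int n / 2) (of_int m / 2) = Kka k 2 (of_int n) (of_int m)
       \<and> Kka k 2 (of_int n) (of_int m) = HK (2 * k) n m
       \<and> Kka k 1 (of_int n) (of_int m) = HK k n m"
proof (intro conjI)
  show "Kka k 2 (of_int n) (of_int m) = HK (2 * k) n m" using part_HK[OF assms(1)] by simp
  show "Kka k 1 (of_int n) (of_int m) = HK k n m" using part_HK[OF assms(1), of 1] by simp
  define S where "S = {h. h < k \<and> coprime h k}"
  define f where "f = (\<lambda>h::nat. ee (2 * k) (- n * int h + m * negInv (kstar k) (int h)))"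
  have fin: "finite S" unfolding S_def by simp
  have set: "{h. h < 2 * k \<and> coprime h (2 * k)} = S \<union> (\<lambda>j. j + k) ` S"
  proof (intro equalityI subsetI)
    fix h assume "h \<in> {h. h < 2 * k \<and> coprime h (2 * k)}"
    then have h: "h < 2 * k" "coprime h k" using cop2[OF assms(1)] by auto
    show "h \<in> S \<union> (\<lambda>j. j + k) ` S"
    proof (cases "h < k")
      case True then show ?thesis using h S_def by auto
    next
      case False
      then have e: "h = (h - k) + k" by simp
      then have "coprime ((h - k) + k) k" using h(2) by simp
      then have "h - k \<in> S" using h(1) False unfolding S_def by (simp only: cop_add_self) simp
      then show ?thesis using e by blast
    qed
  next
    fix h assume "h \<in> S \<union> (\<lambda>j. j + k) ` S"
    then consider "h \<in> S" | j where "j \<in> S" "h = j + k" by blast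
    then show "h \<in> {h. h < 2 * k \<and> coprime h (2 * k)}"
    proof cases
      case 1 then show ?thesis using cop2[OF assms(1), of h] unfolding S_def by simp
    next
      case 2
      then have "coprime (j + k) k" "j < k" unfolding S_def by (simp_all only: cop_add_self mem_Collect_eq)
      then show ?thesis using cop2[OF assms(1), of h] 2(2) by simp
    qed
  qed
  have disj: "S \<inter> (\<lambda>j. j + k) ` S = {}" unfolding S_def by auto
  have shiftf: "f (j + k) = f j" if "j \<in> S" for j
  proof -
    from that have j: "j < k" "coprime j k" unfolding S_def by auto
    have oj: "odd j" using j(2) assms(1) c4n by auto
    have cj: "coprime (int j) (kstar k)" using coprime_kstar assms(1) j by simp
    have cjk: "coprime (int (j + k)) (kstar k)" using coprime_kstar assms(1) j
      by (simp add: cop_add_self)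
    have cjk2: "coprime (int j + int k) (2 * int k)"
      using j cop2[OF assms(1), of "j + k"] by (simp add: cop_add_self flip: of_nat_add of_nat_mult)
    have dv: "2 * int k dvd kstar k" using assms(1) unfolding kstar_def by auto
    show ?thesis unfolding f_def
      apply (rule ee_cong)
      using shift[of "int k" "int j" "kstar k", OF _ _ dv negInv_prop[OF cj] _ cjk2 assms(2,3)]
        negInv_prop[OF cjk] oj assms(1) by simp
  qed
  have "Kka k 2 (of_int n) (of_int m) = sum f S + sum f ((\<lambda>j. j + k) ` S)"
    unfolding Kka_int f_def set by (rule sum.union_disjoint) (use fin disj in auto)
  also have "sum f ((\<lambda>j. j + k) ` S) = sum (\<lambda>j. f (j + k)) S"
    by (subst sum.reindex) (auto simp: inj_on_def)
  also have "\<dots> = sum f S" using shiftf by simp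
  also have "sum f S = Kka k 1 (of_int n / 2) (of_int m / 2)" unfolding Kka_half f_def S_def ..
  finally show "2 * Kka k 1 (of_int n / 2) (of_int m / 2) = Kka k 2 (of_int n) (of_int m)" by simp
qed

end
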